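(* In every T2R semigroup $S=S_0\cup S_1$ with $S_1=\{u,v\}$, there is an element $b\in S_0$ such that $ub\neq b$ and $vb\neq b$.
   Context: A semigroup $S$ is a $\Delta$-semigroup if the lattice of all congruences of $S$ is a chain with respect to inclusion. A semigroup $N$ with zero $0$ is nil if every element has some power equal to $0$; non-trivial means having more than one element. A T2R semigroup is a $\Delta$-semigroup $S$ which is the disjoint union of a non-trivial nil ideal $S_0$ (with zero $0$, which is then the zero of $S$) and a subsemigroup $S_1=\{u,v\}$, $u\neq v$, which is a right zero semigroup ($xy=y$ for $x,y\in S_1$). *)

theory Defs
  imports Main
begin

definition semigroup_on :: "'a set \<Rightarrow> ('a \<Rightarrow> 'a \<Rightarrow> 'a) \<Rightarrow> bool" where
  "semigroup_on S mult \<longleftrightarrow>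
     (\<forall>x\<in>S. \<forall>y\<in>S. mult x y \<in> S) \<and>
     (\<forall>x\<in>S. \<forall>y\<in>S. \<forall>z\<in>S. mult (mult x y) z = mult x (mult y z))"

definition congruence_on :: "'a set \<Rightarrow> ('a \<Rightarrow> 'a \<Rightarrow> 'a) \<Rightarrow> ('a \<times> 'a) set \<Rightarrow> bool" where
  "congruence_on S mult r \<longleftrightarrow> equiv S r \<and>
     (\<forall>a b s. (a, b) \<in> r \<and> s \<in> S \<longrightarrow> (mult s a, mult s b) \<in> r \<and> (mult a s, mult b s) \<in> r)"

definition delta_semigroup :: "'a set \<Rightarrow> ('a \<Rightarrow> 'a \<Rightarrow> 'a) \<Rightarrow> bool" where
  "delta_semigroup S mult \<longleftrightarrow> semigroup_on S mult \<and>
     (\<forall>r1 r2. congruence_on S mult r1 \<and> congruence_on S mult r2 \<longrightarrow> r1 \<subseteq> r2 \<or> r2 \<subseteq> r1)"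

text \<open>spow mult x n = x^(n+1) (positive powers in a semigroup).\<close>
primrec spow :: "('a \<Rightarrow> 'a \<Rightarrow> 'a) \<Rightarrow> 'a \<Rightarrow> nat \<Rightarrow> 'a" where
  "spow mult x 0 = x"
| "spow mult x (Suc n) = mult (spow mult x n) x"

definition T2R :: "'a set \<Rightarrow> ('a \<Rightarrow> 'a \<Rightarrow> 'a) \<Rightarrow> 'a set \<Rightarrow> 'a \<Rightarrow> 'a \<Rightarrow> 'a \<Rightarrow> bool" where
  "T2R S mult S0 z u v \<longleftrightarrow>
     delta_semigroup S mult \<and>
     S = S0 \<union> {u, v} \<and> S0 \<inter> {u, v} = {} \<and> u \<noteq> v \<and>
     \<comment> \<open>S0 is an ideal of S\<close>
     (\<forall>x\<in>S0. \<forall>s\<in>S. mult s x \<in> S0 \<and> mult x s \<in> S0) \<and>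
     \<comment> \<open>z is the zero of S0\<close>
     z \<in> S0 \<and> (\<forall>x\<in>S0. mult z x = z \<and> mult x z = z) \<and>
     \<comment> \<open>S0 is nil\<close>
     (\<forall>x\<in>S0. \<exists>n. spow mult x n = z) \<and>
     \<comment> \<open>S0 is non-trivial\<close>
     (\<exists>x\<in>S0. x \<noteq> z) \<and>
     \<comment> \<open>{u,v} is a right zero semigroup\<close>
     (\<forall>x\<in>{u, v}. \<forall>y\<in>{u, v}. mult x y = y)"

end

theory Submission
  imports Defs
begin

lemma congI:
  assumes "r \<subseteq> S \<times> S" "\<And>x. x \<in> S \<Longrightarrow> (x,x) \<in> r"
    "\<And>x y. (x,y) \<in> r \<Longrightarrow> (y,x) \<in> r"
    "\<And>x y w. (x,y) \<in> r \<Longrightarrow> (y,w) \<in> r \<Longrightarrow> (x,w) \<in> r"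
    "\<And>a b s. (a,b) \<in> r \<Longrightarrow> s \<in> S \<Longrightarrow> (mult s a, mult s b) \<in> r"
    "\<And>a b s. (a,b) \<in> r \<Longrightarrow> s \<in> S \<Longrightarrow> (mult a s, mult b s) \<in> r"
  shows "congruence_on S mult r"
  unfolding congruence_on_def equiv_def
proof (intro conjI allI impI)
  show "refl_on S r" unfolding refl_on_def using assms(1,2) by auto
  show "sym r" unfolding sym_def using assms(3) by auto
  show "trans r" unfolding trans_def using assms(4) by blast
qed (use assms(1,5,6) in auto)

theorem proposition6:
  assumes "T2R S mult S0 z u v"
  shows "\<exists>b\<in>S0. mult u b \<noteq> b \<and> mult v b \<noteq> b"
proof (rule ccontr)
  assume neg: "\<not> ?thesis"
  from assms have D: "delta_semigroup S mult" and SD: "S = S0 \<union> {u, v}" and disj: "S0 \<inter> {u, v} = {}"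
    and uv: "u \<noteq> v" and id: "\<forall>x\<in>S0. \<forall>s\<in>S. mult s x \<in> S0 \<and> mult x s \<in> S0"
    and zS0: "z \<in> S0" and zz: "\<forall>x\<in>S0. mult z x = z \<and> mult x z = z"
    and nt: "\<exists>x\<in>S0. x \<noteq> z" and rz: "\<forall>x\<in>{u, v}. \<forall>y\<in>{u, v}. mult x y = y"
    unfolding T2R_def by auto
  from D have cl: "\<forall>x\<in>S. \<forall>y\<in>S. mult x y \<in> S"
    and as: "\<forall>x\<in>S. \<forall>y\<in>S. \<forall>w\<in>S. mult (mult x y) w = mult x (mult y w)"
    and ch: "\<And>r1 r2. congruence_on S mult r1 \<Longrightarrow> congruence_on S mult r2 \<Longrightarrow> r1 \<subseteq> r2 \<or> r2 \<subseteq> r1"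
    unfolding delta_semigroup_def semigroup_on_def by auto
  have uS: "u \<in> S" and vS: "v \<in> S" using SD by auto
  have S0S: "S0 \<subseteq> S" using SD by auto
  have uvu: "mult v u = u" "mult u v = v" "mult u u = u" "mult v v = v" using rz by auto
  have H: "\<forall>b\<in>S0. mult u b = b \<and> mult v b = b"
  proof
    fix b assume b: "b \<in> S0"
    have bS: "b \<in> S" using b S0S by auto
    from neg b have "mult u b = b \<or> mult v b = b" by auto
    then show "mult u b = b \<and> mult v b = b"
    proof
      assume e: "mult u b = b"
      have "mult v b = mult v (mult u b)" using e by simp
      also have "\<dots> = mult (mult v u) b" using as uS vS bS by simp
      finally show ?thesis using e uvu by simp
    next
      assume e: "mult v b = b"
      have "mult u b = mult u (mult v b)" using e by simp
      also have "\<dots> = mult (mult u v) b" using as uS vS bS by simp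
      finally show ?thesis using e uvu by simp
    qed
  qed
  have zt: "\<forall>t\<in>S. mult z t = z"
  proof
    fix t assume t: "t \<in> S"
    have zS: "z \<in> S" using zS0 S0S by auto
    have "mult z t \<in> S0" using id zS0 t by auto
    hence "mult z (mult z t) = z" using zz by auto
    moreover have "mult z t = mult (mult z z) t" using zz zS0 by auto
    moreover have "mult (mult z z) t = mult z (mult z t)" using as zS t by auto
    ultimately show "mult z t = z" by argo
  qed
  define \<rho> where "\<rho> = {(x,y). x\<in>S0 \<and> y\<in>S0} \<union> Id_on S"
  define \<sigma> where "\<sigma> = {(x,y). x\<in>S \<and> y\<in>S \<and> (\<forall>t\<in>S. mult x t = mult y t)}"
  have c\<rho>: "congruence_on S mult \<rho>"
  proof (rule congI)
    show "\<rho> \<subseteq> S \<times> S" unfolding \<rho>_def using S0S by (auto simp: Id_on_def)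
  next
    fix a b s assume "(a,b) \<in> \<rho>" "s \<in> S"
    thus "(mult s a, mult s b) \<in> \<rho>" "(mult a s, mult b s) \<in> \<rho>"
      unfolding \<rho>_def using id cl by (auto simp: Id_on_def)
  qed (auto simp: \<rho>_def Id_on_def)
  have c\<sigma>: "congruence_on S mult \<sigma>"
  proof (rule congI)
    fix a b s assume ab: "(a,b) \<in> \<sigma>" and s: "s \<in> S"
    hence a: "a \<in> S" and b: "b \<in> S" and e: "\<forall>t\<in>S. mult a t = mult b t" unfolding \<sigma>_def by auto
    have "\<forall>t\<in>S. mult (mult s a) t = mult (mult s b) t"
    proof
      fix t assume t: "t \<in> S"
      have "mult (mult s a) t = mult s (mult a t)" using as s a t by auto
      also have "\<dots> = mult s (mult b t)" using e t by auto
      also have "\<dots> = mult (mult s b) t" using as s b t by auto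
      finally show "mult (mult s a) t = mult (mult s b) t" .
    qed
    thus "(mult s a, mult s b) \<in> \<sigma>" unfolding \<sigma>_def using cl s a b by auto
    have "\<forall>t\<in>S. mult (mult a s) t = mult (mult b s) t"
    proof
      fix t assume t: "t \<in> S"
      have st: "mult s t \<in> S" using cl s t by auto
      have "mult (mult a s) t = mult a (mult s t)" using as s a t by auto
      also have "\<dots> = mult b (mult s t)" using e st by auto
      also have "\<dots> = mult (mult b s) t" using as s b t by auto
      finally show "mult (mult a s) t = mult (mult b s) t" .
    qed
    thus "(mult a s, mult b s) \<in> \<sigma>" unfolding \<sigma>_def using cl s a b by auto
  qed (auto simp: \<sigma>_def)
  have uv\<sigma>: "(u,v) \<in> \<sigma>"
    unfolding \<sigma>_def using uS vS H SD uvu by auto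
  have uv\<rho>: "(u,v) \<notin> \<rho>" unfolding \<rho>_def using disj uv by auto
  from ch[OF c\<rho> c\<sigma>] uv\<sigma> uv\<rho> have "\<rho> \<subseteq> \<sigma>" by auto
  have zero: "\<forall>b\<in>S0. \<forall>t\<in>S. mult b t = z"
  proof (intro ballI)
    fix b t assume b: "b \<in> S0" and t: "t \<in> S"
    have "(b,z) \<in> \<rho>" unfolding \<rho>_def using b zS0 by blast
    hence "(b,z) \<in> \<sigma>" using \<open>\<rho> \<subseteq> \<sigma>\<close> by blast
    hence "mult b t = mult z t" using t unfolding \<sigma>_def by blast
    thus "mult b t = z" using zt t by simp
  qed
  obtain b where b: "b \<in> S0" "b \<noteq> z" using nt by auto
  define \<tau> where "\<tau> = Id_on S \<union> {(z,b),(b,z)}"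
  define \<pi> where "\<pi> = Id_on S \<union> {(u,v),(v,u)}"
  have bS: "b \<in> S" "z \<in> S" using b zS0 S0S by auto
  have c\<tau>: "congruence_on S mult \<tau>"
  proof (rule congI)
    fix a c s assume ac: "(a,c) \<in> \<tau>" and s: "s \<in> S"
    show "(mult s a, mult s c) \<in> \<tau>"
    proof (cases "a = c")
      case True thus ?thesis using ac s cl bS unfolding \<tau>_def by (auto simp: Id_on_def)
    next
      case False
      hence ac': "a \<in> S0 \<and> c \<in> S0" using ac b zS0 unfolding \<tau>_def by (auto simp: Id_on_def)
      have "s \<in> S0 \<or> s = u \<or> s = v" using s SD by auto
      thus ?thesis
      proof (elim disjE)
        assume s0: "s \<in> S0"
        have "mult s a = z" "mult s c = z" using zero s0 ac' S0S by blast+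
        thus ?thesis using bS unfolding \<tau>_def by (auto simp: Id_on_def)
      qed (use H ac' ac in auto)
    qed
    show "(mult a s, mult c s) \<in> \<tau>"
    proof (cases "a = c")
      case True thus ?thesis using ac s cl bS unfolding \<tau>_def by (auto simp: Id_on_def)
    next
      case False
      hence ac': "a \<in> S0 \<and> c \<in> S0" using ac b zS0 unfolding \<tau>_def by (auto simp: Id_on_def)
      thus ?thesis using zero s bS unfolding \<tau>_def by (auto simp: Id_on_def)
    qed
  qed (use bS in \<open>auto simp: \<tau>_def Id_on_def\<close>)
  have c\<pi>: "congruence_on S mult \<pi>"
  proof (rule congI)
    fix a c s assume ac: "(a,c) \<in> \<pi>" and s: "s \<in> S"
    show "(mult s a, mult s c) \<in> \<pi>"
    proof (cases "a = c")
      case True thus ?thesis using ac s cl uS vS unfolding \<pi>_def by (auto simp: Id_on_def)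
    next
      case False
      hence ac': "a \<in> {u,v} \<and> c \<in> {u,v}" using ac unfolding \<pi>_def by (auto simp: Id_on_def)
      have "s \<in> S0 \<or> s = u \<or> s = v" using s SD by auto
      thus ?thesis
      proof (elim disjE)
        assume "s \<in> S0" thus ?thesis using zero ac' uS vS zS0 S0S unfolding \<pi>_def by (auto simp: Id_on_def)
      qed (use uvu ac' ac in auto)
    qed
    show "(mult a s, mult c s) \<in> \<pi>"
    proof (cases "a = c")
      case True thus ?thesis using ac s cl uS vS unfolding \<pi>_def by (auto simp: Id_on_def)
    next
      case False
      hence ac': "a \<in> {u,v} \<and> c \<in> {u,v}" using ac unfolding \<pi>_def by (auto simp: Id_on_def)
      have "s \<in> S0 \<or> s = u \<or> s = v" using s SD by auto
      thus ?thesis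
      proof (elim disjE)
        assume "s \<in> S0" thus ?thesis using H ac' cl s unfolding \<pi>_def by (auto simp: Id_on_def)
      qed (use uvu ac' uS vS in \<open>auto simp: \<pi>_def Id_on_def\<close>)
    qed
  qed (use uS vS in \<open>auto simp: \<pi>_def Id_on_def\<close>)
  have "(z,b) \<in> \<tau>" "(z,b) \<notin> \<pi>" "(u,v) \<in> \<pi>" "(u,v) \<notin> \<tau>"
    unfolding \<tau>_def \<pi>_def using b uv disj zS0 by auto
  with ch[OF c\<tau> c\<pi>] show False by auto
qed

end
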